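(* Let $G$ and $N$ be finitely presented groups and $Q$ a finite group. The following are equivalent: (1) there is a surjective homomorphism $G\to N\times Q$; (2) there is a surjective homomorphism $\tau:G\to Q$ and a $(Q,\tau)$-presentation $\langle\mathcal X\cup\mathcal Y\mid\mathcal R\rangle$ of $G$, with $\mathcal X=\{x_1,\dots,x_t\}$ and $\mathcal Y=\{y_1,\dots,y_\ell\}$, such that there is an assignment $x_j\mapsto h_j\in N$, $y_j\mapsto k_j\in N$ under which every relator $r\in\mathcal R$ evaluates to $1_N$ (each letter $x_j^{\pm1}$ replaced by $h_j^{\pm1}$, each $y_j^{\pm1}$ by $k_j^{\pm1}$) and $\langle k_1,\dots,k_\ell\rangle=N$.
   Context: Let $\tau:G\to Q$ be an epimorphism. A $(Q,\tau)$-presentation of $G$ is a presentation $\langle\mathcal X\cup\mathcal Y\mid\mathcal R\rangle$ of $G$ with $\mathcal X,\mathcal Y,\mathcal R$ finite, the generators in $\mathcal X$ representing elements of $G$ on which $\tau$ restricts to a bijection $\mathcal X\to Q$, and the elements represented by $\mathcal Y$ generating $\ker(\tau)$. (In the paper, condition (2) is phrased as: the problem "EquationsSubspan" answers Yes on input $N$ and the system of equations without constants obtained from $\mathcal R$ by replacing each $x_j$ by a variable $X_j$ and each $y_j$ by a variable $Y_j$, i.e. there is a solution $\sigma$ with $\langle\sigma(Y_1),\dots,\sigma(Y_\ell)\rangle=N$.) *)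

theory Defs
  imports "HOL-Algebra.Algebra"
begin

text \<open>Words over a generator alphabet: a letter is a pair (generator, sign),
  where sign True means the generator itself and False its inverse.\<close>

type_synonym 's word = "('s \<times> bool) list"

definition inv_letter :: "'s \<times> bool \<Rightarrow> 's \<times> bool" where
  "inv_letter l = (fst l, \<not> snd l)"

definition inv_word :: "'s word \<Rightarrow> 's word" where
  "inv_word w = rev (map inv_letter w)"

definition word_over :: "'s set \<Rightarrow> 's word \<Rightarrow> bool" where
  "word_over S w \<longleftrightarrow> (\<forall>l \<in> set w. fst l \<in> S)"

definition eval_word :: "('g, 'm) monoid_scheme \<Rightarrow> ('s \<Rightarrow> 'g) \<Rightarrow> 's word \<Rightarrow> 'g" where
  "eval_word G f w =
     foldr (\<lambda>l acc. (if snd l then f (fst l) else inv\<^bsub>G\<^esub> (f (fst l))) \<otimes>\<^bsub>G\<^esub> acc) w \<one>\<^bsub>G\<^esub>"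

text \<open>A word lies in the normal closure of R in the free group on S iff it can be
  transformed into the empty word by such insertions and their inverse deletions.\<close>

inductive insert_step :: "'s set \<Rightarrow> 's word set \<Rightarrow> 's word \<Rightarrow> 's word \<Rightarrow> bool"
  for S R where
  ins_pair: "fst x \<in> S \<Longrightarrow> insert_step S R (p @ q) (p @ [x, inv_letter x] @ q)"
| ins_rel: "r \<in> R \<Longrightarrow> insert_step S R (p @ q) (p @ r @ q)"
| ins_inv_rel: "r \<in> R \<Longrightarrow> insert_step S R (p @ q) (p @ inv_word r @ q)"

definition in_normal_closure :: "'s set \<Rightarrow> 's word set \<Rightarrow> 's word \<Rightarrow> bool" where
  "in_normal_closure S R w \<longleftrightarrow> (symclp (insert_step S R))\<^sup>*\<^sup>* w []"

definition is_presentation ::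
  "('g, 'm) monoid_scheme \<Rightarrow> 's set \<Rightarrow> ('s \<Rightarrow> 'g) \<Rightarrow> 's word set \<Rightarrow> bool" where
  "is_presentation G S g R \<longleftrightarrow>
     g ` S \<subseteq> carrier G \<and>
     generate G (g ` S) = carrier G \<and>
     (\<forall>r \<in> R. word_over S r \<and> eval_word G g r = \<one>\<^bsub>G\<^esub>) \<and>
     (\<forall>w. word_over S w \<longrightarrow> eval_word G g w = \<one>\<^bsub>G\<^esub> \<longrightarrow> in_normal_closure S R w)"

definition finitely_presented :: "('g, 'm) monoid_scheme \<Rightarrow> bool" where
  "finitely_presented G \<longleftrightarrow>
     (\<exists>(S :: nat set) g R. finite S \<and> finite R \<and> is_presentation G S g R)"

text \<open>A \<open>(Q,\<tau>)\<close>-presentation with generators x_j = Inl j (j < t) and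
  y_j = Inr j (j < l), the generator s representing g s in G.\<close>

definition XY_gens :: "nat \<Rightarrow> nat \<Rightarrow> (nat + nat) set" where
  "XY_gens t l = Inl ` {..<t} \<union> Inr ` {..<l}"

definition Q_tau_presentation ::
  "('g, 'm) monoid_scheme \<Rightarrow> ('q, 'k) monoid_scheme \<Rightarrow> ('g \<Rightarrow> 'q) \<Rightarrow>
   nat \<Rightarrow> nat \<Rightarrow> (nat + nat \<Rightarrow> 'g) \<Rightarrow> (nat + nat) word set \<Rightarrow> bool" where
  "Q_tau_presentation G Q \<tau> t l g R \<longleftrightarrow>
     finite R \<and>
     is_presentation G (XY_gens t l) g R \<and>
     bij_betw (\<lambda>j. \<tau> (g (Inl j))) {..<t} (carrier Q) \<and>
     generate G ((\<lambda>j. g (Inr j)) ` {..<l}) = kernel G Q \<tau>"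

end

theory Submission
  imports Defs
begin

definition lval :: "('g,'m) monoid_scheme \<Rightarrow> ('s \<Rightarrow> 'g) \<Rightarrow> 's \<times> bool \<Rightarrow> 'g" where
  "lval G f l = (if snd l then f (fst l) else inv\<^bsub>G\<^esub> (f (fst l)))"

lemma eval_word_Nil[simp]: "eval_word G f [] = \<one>\<^bsub>G\<^esub>"
  by (simp add: eval_word_def)

lemma eval_word_Cons[simp]: "eval_word G f (l # w) = lval G f l \<otimes>\<^bsub>G\<^esub> eval_word G f w"
  by (simp add: eval_word_def lval_def)

lemma word_over_simps[simp]:
  "word_over S []" "word_over S (l # w) \<longleftrightarrow> fst l \<in> S \<and> word_over S w"
  "word_over S (u @ v) \<longleftrightarrow> word_over S u \<and> word_over S v"
  by (auto simp: word_over_def)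

lemma word_over_UNIV[simp]: "word_over UNIV w"
  by (simp add: word_over_def)

lemma inv_letter_simps[simp]: "fst (inv_letter l) = fst l" "snd (inv_letter l) = (\<not> snd l)"
  "inv_letter (inv_letter l) = l"
  by (auto simp: inv_letter_def)

lemma inv_word_simps[simp]: "inv_word [] = []" "inv_word (l # w) = inv_word w @ [inv_letter l]"
  "inv_word (u @ v) = inv_word v @ inv_word u" "inv_word (inv_word w) = w"
  by (auto simp: inv_word_def rev_map[symmetric] comp_def)

lemma word_over_inv_word[simp]: "word_over S (inv_word w) \<longleftrightarrow> word_over S w"
  by (auto simp: word_over_def inv_word_def)

lemma eval_word_cong: "(\<And>l. l \<in> set w \<Longrightarrow> f (fst l) = f' (fst l)) \<Longrightarrow> eval_word G f w = eval_word G f' w"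
  by (induction w) (auto simp: lval_def)

context group
begin

lemma lval_closed: "f ` S \<subseteq> carrier G \<Longrightarrow> fst l \<in> S \<Longrightarrow> lval G f l \<in> carrier G"
  by (auto simp: lval_def)

lemma eval_word_closed: "f ` S \<subseteq> carrier G \<Longrightarrow> word_over S w \<Longrightarrow> eval_word G f w \<in> carrier G"
  by (induction w) (auto intro!: lval_closed)

lemma eval_word_append: "f ` S \<subseteq> carrier G \<Longrightarrow> word_over S u \<Longrightarrow> word_over S v \<Longrightarrow>
   eval_word G f (u @ v) = eval_word G f u \<otimes> eval_word G f v"
  by (induction u) (auto simp: m_assoc lval_closed eval_word_closed)

lemma lval_inv: "f ` S \<subseteq> carrier G \<Longrightarrow> fst l \<in> S \<Longrightarrow> lval G f (inv_letter l) = inv (lval G f l)"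
  by (auto simp: lval_def)

lemma eval_inv_word: "f ` S \<subseteq> carrier G \<Longrightarrow> word_over S w \<Longrightarrow>
   eval_word G f (inv_word w) = inv (eval_word G f w)"
proof (induction w)
  case Nil then show ?case by simp
next
  case (Cons l w)
  then have c: "lval G f l \<in> carrier G" "eval_word G f w \<in> carrier G"
    by (auto intro: lval_closed eval_word_closed)
  have "eval_word G f (inv_word (l # w)) = inv (eval_word G f w) \<otimes> inv (lval G f l)"
    using Cons c by (simp add: eval_word_append lval_inv)
  also have "\<dots> = inv (lval G f l \<otimes> eval_word G f w)"
    using c by (simp add: inv_mult_group)
  finally show ?case by simp
qed

end

lemma eval_word_hom:
  assumes "group G" "group H" "h \<in> hom G H" "f ` S \<subseteq> carrier G" "word_over S w"
  shows "h (eval_word G f w) = eval_word H (\<lambda>s. h (f s)) w"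
  using assms(5)
proof (induction w)
  case Nil then show ?case using assms by (simp add: hom_one)
next
  case (Cons l w)
  interpret gh: group_hom G H h using assms by (simp add: group_hom_def group_hom_axioms_def)
  have c: "lval G f l \<in> carrier G" "eval_word G f w \<in> carrier G"
    using Cons assms by (auto intro: gh.G.lval_closed gh.G.eval_word_closed)
  have "h (lval G f l) = lval H (\<lambda>s. h (f s)) l"
    using Cons assms by (auto simp: lval_def)
  then show ?case using Cons c by simp
qed

definition subst :: "('s \<Rightarrow> 't word) \<Rightarrow> 's word \<Rightarrow> 't word" where
  "subst \<rho> w = concat (map (\<lambda>l. if snd l then \<rho> (fst l) else inv_word (\<rho> (fst l))) w)"

lemma subst_simps[simp]: "subst \<rho> [] = []"
  "subst \<rho> (l # w) = (if snd l then \<rho> (fst l) else inv_word (\<rho> (fst l))) @ subst \<rho> w"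
  "subst \<rho> (u @ v) = subst \<rho> u @ subst \<rho> v"
  by (auto simp: subst_def)

lemma subst_inv_word[simp]: "subst \<rho> (inv_word w) = inv_word (subst \<rho> w)"
  by (induction w) auto

lemma word_over_subst: "word_over S w \<Longrightarrow> (\<And>s. s \<in> S \<Longrightarrow> word_over T (\<rho> s)) \<Longrightarrow> word_over T (subst \<rho> w)"
  by (induction w) auto

lemma (in group) eval_subst:
  assumes "g ` T \<subseteq> carrier G" "\<And>s. s \<in> S \<Longrightarrow> word_over T (\<rho> s)" "word_over S w"
  shows "eval_word G g (subst \<rho> w) = eval_word G (\<lambda>s. eval_word G g (\<rho> s)) w"
  using assms(3)
proof (induction w)
  case Nil then show ?case by simp
next
  case (Cons l w)
  have ws: "word_over T (subst \<rho> w)" using Cons assms by (auto intro: word_over_subst)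
  have l: "word_over T (\<rho> (fst l))" using Cons assms by auto
  show ?case using Cons ws l assms
    by (auto simp: eval_word_append eval_inv_word lval_def)
qed


abbreviation EQ where "EQ S R \<equiv> equivclp (insert_step S R)"

lemma nc_iff: "in_normal_closure S R w \<longleftrightarrow> EQ S R w []"
  by (simp add: in_normal_closure_def equivclp_def)

lemma insert_step_ctx: "insert_step S R u v \<Longrightarrow> insert_step S R (a @ u @ b) (a @ v @ b)"
proof (induction rule: insert_step.induct)
  case (ins_pair x p q)
  then show ?case using insert_step.ins_pair[of x S R "a @ p" "q @ b"] by simp
next
  case (ins_rel r p q)
  then show ?case using insert_step.ins_rel[of r R S "a @ p" "q @ b"] by simp
next
  case (ins_inv_rel r p q)
  then show ?case using insert_step.ins_inv_rel[of r R S "a @ p" "q @ b"] by simp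
qed

lemma EQ_ctx: "EQ S R u v \<Longrightarrow> EQ S R (a @ u @ b) (a @ v @ b)"
proof (induction rule: equivclp_induct)
  case base then show ?case by simp
next
  case (step y z)
  then show ?case
    by (metis equivclp_into_equivclp insert_step_ctx)
qed

lemma EQ_append: "EQ S R u u' \<Longrightarrow> EQ S R v v' \<Longrightarrow> EQ S R (u @ v) (u' @ v')"
  using EQ_ctx[of S R u u' "[]" v] EQ_ctx[of S R v v' u' "[]"]
  by (auto intro: equivclp_trans)

lemma EQ_pair: "fst x \<in> S \<Longrightarrow> EQ S R (p @ [x, inv_letter x] @ q) (p @ q)"
  using insert_step.ins_pair[of x S R p q] by blast

lemma EQ_cancel: "word_over S w \<Longrightarrow> EQ S R (a @ w @ inv_word w @ b) (a @ b)"
proof (induction w arbitrary: a b)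
  case Nil then show ?case by simp
next
  case (Cons x w)
  have "EQ S R ((a @ [x]) @ w @ inv_word w @ ([inv_letter x] @ b)) ((a @ [x]) @ ([inv_letter x] @ b))"
    using Cons.IH[of "a @ [x]" "[inv_letter x] @ b"] Cons.prems by simp
  moreover have "EQ S R (a @ [x, inv_letter x] @ b) (a @ b)" using Cons by (intro EQ_pair) auto
  ultimately show ?case by (auto intro: equivclp_trans)
qed

lemma EQ_rel: "r \<in> R \<Longrightarrow> EQ S R (a @ r @ b) (a @ b)"
  using insert_step.ins_rel[of r R S a b] by blast

lemma EQ_inv_rel: "r \<in> R \<Longrightarrow> EQ S R (a @ inv_word r @ b) (a @ b)"
  using insert_step.ins_inv_rel[of r R S a b] by blast

lemma (in group) insert_step_eval:
  assumes "\<And>s. f s \<in> carrier G" "\<And>r. r \<in> R \<Longrightarrow> eval_word G f r = \<one>"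
    and "insert_step S R u v"
  shows "eval_word G f u = eval_word G f v"
proof -
  have fc: "f ` UNIV \<subseteq> carrier G" using assms by auto
  note ea = eval_word_append[OF fc, simplified]
  note ec = eval_word_closed[OF fc, simplified]
  from assms(3) show ?thesis
  proof cases
    case (ins_pair x p q)
    have lx: "lval G f x \<in> carrier G" using lval_closed[OF fc] by simp
    have "eval_word G f ([x, inv_letter x] @ q) = eval_word G f q"
      using lx ec[of q] by (simp add: lval_inv[OF fc] m_assoc[symmetric])
    then show ?thesis using ins_pair by (simp add: ea ec)
  next
    case (ins_rel r p q)
    then show ?thesis using assms(2) by (simp add: ea ec)
  next
    case (ins_inv_rel r p q)
    then show ?thesis using assms(2) eval_inv_word[OF fc] by (simp add: ea ec)
  qed
qed

lemma (in group) EQ_eval: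
  assumes "\<And>s. f s \<in> carrier G" "\<And>r. r \<in> R \<Longrightarrow> eval_word G f r = \<one>"
    and "EQ S R u v"
  shows "eval_word G f u = eval_word G f v"
  using assms(3)
proof (induction rule: equivclp_induct)
  case base then show ?case by simp
next
  case (step y z)
  then show ?case using insert_step_eval[OF assms(1,2)] by metis
qed

lemma (in group) gen_word:
  assumes "g ` S \<subseteq> carrier G" "x \<in> generate G (g ` S)"
  shows "\<exists>w. word_over S w \<and> eval_word G g w = x"
  using assms(2)
proof (induction rule: generate.induct)
  case one
  then show ?case by (intro exI[of _ "[]"]) simp
next
  case (incl h)
  then obtain s where "s \<in> S" "h = g s" by auto
  then show ?case using assms(1)
    by (intro exI[of _ "[(s, True)]"]) (auto simp: lval_def)
next
  case (inv h)
  then obtain s where "s \<in> S" "h = g s" by auto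
  then show ?case using assms(1)
    by (intro exI[of _ "[(s, False)]"]) (auto simp: lval_def)
next
  case (eng h1 h2)
  then obtain w1 w2 where "word_over S w1" "eval_word G g w1 = h1" "word_over S w2" "eval_word G g w2 = h2"
    by auto
  then show ?case using assms(1)
    by (intro exI[of _ "w1 @ w2"]) (auto simp: eval_word_append)
qed

lemma vonDyck:
  assumes G: "group G" and N: "group N" and P: "is_presentation G S g R"
    and f: "f ` S \<subseteq> carrier N" and rel: "\<And>r. r \<in> R \<Longrightarrow> eval_word N f r = \<one>\<^bsub>N\<^esub>"
  shows "\<exists>\<psi> \<in> hom G N. \<forall>s\<in>S. \<psi> (g s) = f s"
proof -
  interpret G: group G by fact
  interpret N: group N by fact
  define f' where "f' s = (if s \<in> S then f s else \<one>\<^bsub>N\<^esub>)" for s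
  have f'c: "\<And>s. f' s \<in> carrier N" using f by (auto simp: f'_def)
  have f'c2: "f' ` UNIV \<subseteq> carrier N" using f'c by auto
  have gS: "g ` S \<subseteq> carrier G" and gen: "generate G (g ` S) = carrier G"
    and Rw: "\<And>r. r \<in> R \<Longrightarrow> word_over S r \<and> eval_word G g r = \<one>\<^bsub>G\<^esub>"
    and Pc: "\<And>w. word_over S w \<Longrightarrow> eval_word G g w = \<one>\<^bsub>G\<^esub> \<Longrightarrow> in_normal_closure S R w"
    using P by (auto simp: is_presentation_def)
  have ff': "word_over S w \<Longrightarrow> eval_word N f' w = eval_word N f w" for w
    by (rule eval_word_cong) (auto simp: f'_def word_over_def)
  have rel': "\<And>r. r \<in> R \<Longrightarrow> eval_word N f' r = \<one>\<^bsub>N\<^esub>" using rel Rw ff' by auto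
  have wd: "eval_word N f' w1 = eval_word N f' w2"
    if "word_over S w1" "word_over S w2" "eval_word G g w1 = eval_word G g w2" for w1 w2
  proof -
    let ?w = "w1 @ inv_word w2"
    have "eval_word G g ?w = \<one>\<^bsub>G\<^esub>"
      using that gS by (simp add: G.eval_word_append G.eval_inv_word G.eval_word_closed)
    then have "EQ S R ?w []" using Pc[of ?w] that by (simp add: nc_iff)
    then have "eval_word N f' ?w = \<one>\<^bsub>N\<^esub>" using N.EQ_eval[OF f'c rel'] by force
    then have "eval_word N f' w1 \<otimes>\<^bsub>N\<^esub> inv\<^bsub>N\<^esub> (eval_word N f' w2) = \<one>\<^bsub>N\<^esub>"
      using f'c2 by (simp add: N.eval_word_append[OF f'c2] N.eval_inv_word[OF f'c2])
    then show ?thesis using N.eval_word_closed[OF f'c2]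
      by (metis N.inv_equality N.inv_inv N.inv_closed word_over_UNIV)
  qed
  have ex: "\<exists>w. word_over S w \<and> eval_word G g w = x" if "x \<in> carrier G" for x
    using G.gen_word[OF gS] that gen by auto
  define W where "W x = (SOME w. word_over S w \<and> eval_word G g w = x)" for x
  have W: "word_over S (W x) \<and> eval_word G g (W x) = x" if "x \<in> carrier G" for x
    unfolding W_def using someI_ex[OF ex[OF that]] .
  define \<psi> where "\<psi> x = eval_word N f' (W x)" for x
  have \<psi>: "\<psi> x = eval_word N f' w" if "word_over S w" "eval_word G g w = x" for w x
  proof -
    have "x \<in> carrier G" using that G.eval_word_closed[OF gS] by auto
    then show ?thesis unfolding \<psi>_def using wd W that by metis
  qed
  have hom: "\<psi> \<in> hom G N"
  proof (rule homI)
    fix x assume "x \<in> carrier G"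
    then show "\<psi> x \<in> carrier N" unfolding \<psi>_def using N.eval_word_closed[OF f'c2] by simp
  next
    fix x y assume xy: "x \<in> carrier G" "y \<in> carrier G"
    have "\<psi> (x \<otimes>\<^bsub>G\<^esub> y) = eval_word N f' (W x @ W y)"
      using W[OF xy(1)] W[OF xy(2)] gS by (intro \<psi>) (auto simp: G.eval_word_append)
    then show "\<psi> (x \<otimes>\<^bsub>G\<^esub> y) = \<psi> x \<otimes>\<^bsub>N\<^esub> \<psi> y"
      unfolding \<psi>_def by (simp add: N.eval_word_append[OF f'c2])
  qed
  have "\<psi> (g s) = f s" if "s \<in> S" for s
  proof -
    have "\<psi> (g s) = eval_word N f' [(s, True)]"
      using that gS by (intro \<psi>) (auto simp: lval_def)
    then show ?thesis using that f by (auto simp: lval_def f'_def image_subset_iff)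
  qed
  then show ?thesis using hom by blast
qed


lemma lift_step:
  assumes "\<And>s. s \<in> S \<Longrightarrow> word_over T (\<rho> s)" "subst \<rho> ` R0 \<subseteq> R"
    and "insert_step S R0 u v"
  shows "EQ T R (subst \<rho> u) (subst \<rho> v)"
  using assms(3)
proof cases
  case (ins_pair x p q)
  let ?Xw = "if snd x then \<rho> (fst x) else inv_word (\<rho> (fst x))"
  have wX: "word_over T ?Xw" using assms(1) ins_pair by auto
  have "subst \<rho> v = subst \<rho> p @ ?Xw @ inv_word ?Xw @ subst \<rho> q"
    using ins_pair by auto
  then have "EQ T R (subst \<rho> v) (subst \<rho> u)" using EQ_cancel[OF wX] ins_pair by simp
  then show ?thesis by (rule equivclp_sym)
next
  case (ins_rel r p q)
  then have "EQ T R (subst \<rho> v) (subst \<rho> u)" using EQ_rel[of "subst \<rho> r" R] assms(2) by auto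
  then show ?thesis by (rule equivclp_sym)
next
  case (ins_inv_rel r p q)
  then have "EQ T R (subst \<rho> v) (subst \<rho> u)" using EQ_inv_rel[of "subst \<rho> r" R] assms(2) by auto
  then show ?thesis by (rule equivclp_sym)
qed

lemma lift_EQ:
  assumes "\<And>s. s \<in> S \<Longrightarrow> word_over T (\<rho> s)" "subst \<rho> ` R0 \<subseteq> R"
    and "EQ S R0 u v"
  shows "EQ T R (subst \<rho> u) (subst \<rho> v)"
  using assms(3)
proof (induction rule: equivclp_induct)
  case base then show ?case by simp
next
  case (step y z)
  then show ?case using lift_step[OF assms(1,2)]
    by (metis equivclp_sym equivclp_trans)
qed

lemma tietze:
  assumes G: "group G" and P: "is_presentation G S g0 R0" and fR0: "finite R0"
    and fS': "finite S'" and g'c: "g' ` S' \<subseteq> carrier G" and g'gen: "generate G (g' ` S') = carrier G"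
  shows "\<exists>R. finite R \<and> is_presentation G S' g' R"
proof -
  interpret G: group G by fact
  have gS: "g0 ` S \<subseteq> carrier G" and gen: "generate G (g0 ` S) = carrier G"
    and Rw: "\<And>r. r \<in> R0 \<Longrightarrow> word_over S r \<and> eval_word G g0 r = \<one>\<^bsub>G\<^esub>"
    and Pc: "\<And>w. word_over S w \<Longrightarrow> eval_word G g0 w = \<one>\<^bsub>G\<^esub> \<Longrightarrow> in_normal_closure S R0 w"
    using P by (auto simp: is_presentation_def)
  have "\<forall>s\<in>S. \<exists>w. word_over S' w \<and> eval_word G g' w = g0 s"
    using G.gen_word[OF g'c] g'gen gS by auto
  then obtain \<rho> where \<rho>: "\<And>s. s \<in> S \<Longrightarrow> word_over S' (\<rho> s) \<and> eval_word G g' (\<rho> s) = g0 s"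
    by metis
  have "\<forall>z\<in>S'. \<exists>w. word_over S w \<and> eval_word G g0 w = g' z"
    using G.gen_word[OF gS] gen g'c by auto
  then obtain \<sigma> where \<sigma>: "\<And>z. z \<in> S' \<Longrightarrow> word_over S (\<sigma> z) \<and> eval_word G g0 (\<sigma> z) = g' z"
    by metis
  define Xw where "Xw z = subst \<rho> (\<sigma> z)" for z
  define rz where "rz z = [(z, True)] @ inv_word (Xw z)" for z
  define R where "R = subst \<rho> ` R0 \<union> rz ` S'"
  have wX: "z \<in> S' \<Longrightarrow> word_over S' (Xw z)" for z
    unfolding Xw_def using \<sigma> \<rho> by (auto intro: word_over_subst)
  have evX: "z \<in> S' \<Longrightarrow> eval_word G g' (Xw z) = g' z" for z
  proof -
    assume z: "z \<in> S'"
    have "eval_word G g' (Xw z) = eval_word G (\<lambda>s. eval_word G g' (\<rho> s)) (\<sigma> z)"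
      unfolding Xw_def using \<sigma>[OF z] \<rho> g'c by (intro G.eval_subst[where S=S]) auto
    also have "\<dots> = eval_word G g0 (\<sigma> z)"
      using \<sigma>[OF z] \<rho> by (intro eval_word_cong) (auto simp: word_over_def)
    finally show ?thesis using \<sigma>[OF z] by simp
  qed
  have evsubst: "word_over S w \<Longrightarrow> eval_word G g' (subst \<rho> w) = eval_word G g0 w" for w
  proof -
    assume w: "word_over S w"
    have "eval_word G g' (subst \<rho> w) = eval_word G (\<lambda>s. eval_word G g' (\<rho> s)) w"
      using w \<rho> g'c by (intro G.eval_subst[where S=S]) auto
    also have "\<dots> = eval_word G g0 w"
      using w \<rho> by (intro eval_word_cong) (auto simp: word_over_def)
    finally show ?thesis .
  qed
  have finR: "finite R" unfolding R_def using fR0 fS' by simp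
  have relw: "word_over S' r \<and> eval_word G g' r = \<one>\<^bsub>G\<^esub>" if rR: "r \<in> R" for r
  proof (cases "r \<in> subst \<rho> ` R0")
    case True
    then obtain r0 where r0: "r0 \<in> R0" "r = subst \<rho> r0" by auto
    then show ?thesis using Rw[OF r0(1)] \<rho> evsubst by (auto intro: word_over_subst)
  next
    case False
    then obtain z where z: "z \<in> S'" "r = rz z" using rR unfolding R_def by auto
    have "eval_word G g' r = g' z \<otimes>\<^bsub>G\<^esub> inv\<^bsub>G\<^esub> (g' z)"
      using z wX evX g'c unfolding rz_def
      by (simp add: lval_def G.eval_inv_word[OF g'c])
    then show ?thesis using z g'c wX unfolding rz_def by auto
  qed
  have letter: "EQ S' R [l] (subst \<rho> (subst \<sigma> [l]))" if l: "fst l \<in> S'" for l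
  proof (cases "snd l")
    case True
    let ?z = "fst l"
    have lz: "l = (?z, True)" using True by (cases l) auto
    have r: "rz ?z \<in> R" unfolding R_def using l by auto
    have "EQ S' R ([(?z,True)] @ inv_word (Xw ?z) @ inv_word (inv_word (Xw ?z)) @ []) ([(?z,True)] @ [])"
      using wX[OF l] by (intro EQ_cancel) simp
    then have 1: "EQ S' R [(?z,True)] (rz ?z @ Xw ?z)"
      unfolding rz_def by (simp add: equivclp_sym)
    have 2: "EQ S' R ([] @ rz ?z @ Xw ?z) ([] @ Xw ?z)" by (rule EQ_rel[OF r])
    have "EQ S' R [(?z,True)] (Xw ?z)" using 1 2 by (auto intro: equivclp_trans)
    then show ?thesis using True lz by (simp add: Xw_def)
  next
    case False
    let ?z = "fst l"
    have lz: "l = (?z, False)" using False by (cases l) auto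
    have r: "rz ?z \<in> R" unfolding R_def using l by auto
    have "EQ S' R ([] @ inv_word (Xw ?z) @ inv_word (inv_word (Xw ?z)) @ [(?z,False)]) ([] @ [(?z,False)])"
      using wX[OF l] by (intro EQ_cancel) simp
    then have 1: "EQ S' R [(?z,False)] (inv_word (Xw ?z) @ inv_word (rz ?z) @ [])"
      unfolding rz_def by (simp add: equivclp_sym inv_letter_def)
    have 2: "EQ S' R (inv_word (Xw ?z) @ inv_word (rz ?z) @ []) (inv_word (Xw ?z) @ [])"
      by (rule EQ_inv_rel[OF r])
    have "EQ S' R [(?z,False)] (inv_word (Xw ?z))" using 1 2 by (auto intro: equivclp_trans)
    then show ?thesis using False lz by (simp add: Xw_def)
  qed
  have bk: "word_over S' w \<Longrightarrow> EQ S' R w (subst \<rho> (subst \<sigma> w))" for w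
  proof (induction w)
    case Nil then show ?case by simp
  next
    case (Cons l w)
    then have "EQ S' R ([l] @ w) (subst \<rho> (subst \<sigma> [l]) @ subst \<rho> (subst \<sigma> w))"
      using letter by (intro EQ_append) auto
    then show ?case by simp
  qed
  have main: "in_normal_closure S' R w" if w: "word_over S' w" "eval_word G g' w = \<one>\<^bsub>G\<^esub>" for w
  proof -
    have ws: "word_over S (subst \<sigma> w)" using w \<sigma> by (auto intro: word_over_subst)
    have "eval_word G g0 (subst \<sigma> w) = eval_word G (\<lambda>z. eval_word G g0 (\<sigma> z)) w"
      using w \<sigma> gS by (intro G.eval_subst[where S=S']) auto
    also have "\<dots> = eval_word G g' w"
      using w \<sigma> by (intro eval_word_cong) (auto simp: word_over_def)
    finally have e0: "EQ S R0 (subst \<sigma> w) []" using Pc[OF ws] w by (simp add: nc_iff)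
    have "EQ S' R (subst \<rho> (subst \<sigma> w)) (subst \<rho> [])"
      using lift_EQ[of S S' \<rho> R0 R, OF _ _ e0] \<rho> by (auto simp: R_def)
    then show ?thesis using bk[OF w(1)] by (auto simp: nc_iff intro: equivclp_trans)
  qed
  have "is_presentation G S' g' R"
    unfolding is_presentation_def using g'c g'gen relw main by blast
  then show ?thesis using finR by blast
qed


lemma (in group) inv_cancel_mid: "x \<in> carrier G \<Longrightarrow> y \<in> carrier G \<Longrightarrow> z \<in> carrier G \<Longrightarrow>
   inv y \<otimes> (y \<otimes> z) = z"
  by (simp add: m_assoc[symmetric])

lemma forward:
  fixes G :: "'g monoid" and N :: "'n monoid" and Q :: "'q monoid"
  assumes G: "group G" and N: "group N" and Q: "group Q"
    and fpG: "finitely_presented G" and fQ: "finite (carrier Q)"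
    and \<phi>: "\<phi> \<in> epi G (N \<times>\<times> Q)"
  shows "\<exists>\<tau> t l g R. \<tau> \<in> epi G Q \<and> Q_tau_presentation G Q \<tau> t l g R \<and>
            (\<exists>h k. (\<forall>j<t. h j \<in> carrier N) \<and> (\<forall>j<l. k j \<in> carrier N) \<and>
                   (\<forall>r\<in>R. eval_word N (case_sum h k) r = \<one>\<^bsub>N\<^esub>) \<and>
                   generate N (k ` {..<l}) = carrier N)"
proof -
  interpret G: group G by fact
  interpret N: group N by fact
  interpret Q: group Q by fact
  have \<phi>h: "\<phi> \<in> hom G (N \<times>\<times> Q)" and \<phi>s: "\<phi> ` carrier G = carrier N \<times> carrier Q"
    using \<phi> by (auto simp: epi_def)
  define \<tau> where "\<tau> x = snd (\<phi> x)" for x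
  define \<pi> where "\<pi> x = fst (\<phi> x)" for x
  have \<phi>c: "x \<in> carrier G \<Longrightarrow> \<phi> x \<in> carrier N \<times> carrier Q" for x
    using \<phi>h by (auto simp: hom_def)
  have \<phi>m: "x \<in> carrier G \<Longrightarrow> y \<in> carrier G \<Longrightarrow> \<phi> (x \<otimes>\<^bsub>G\<^esub> y) = \<phi> x \<otimes>\<^bsub>N \<times>\<times> Q\<^esub> \<phi> y" for x y
    using \<phi>h by (simp add: hom_mult)
  have \<tau>h: "\<tau> \<in> hom G Q"
    by (rule homI) (use \<phi>c \<phi>m in \<open>auto simp: \<tau>_def mult_DirProd' mem_Times_iff\<close>)
  have \<pi>h: "\<pi> \<in> hom G N"
    by (rule homI) (use \<phi>c \<phi>m in \<open>auto simp: \<pi>_def mult_DirProd' mem_Times_iff\<close>)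
  interpret \<tau>: group_hom G Q \<tau>
    using \<tau>h by (simp add: group_hom_def group_hom_axioms_def G Q)
  interpret \<pi>: group_hom G N \<pi>
    using \<pi>h by (simp add: group_hom_def group_hom_axioms_def G N)
  have \<tau>s: "\<tau> ` carrier G = carrier Q"
  proof
    show "\<tau> ` carrier G \<subseteq> carrier Q" by auto
    show "carrier Q \<subseteq> \<tau> ` carrier G"
    proof
      fix q assume "q \<in> carrier Q"
      then have "(\<one>\<^bsub>N\<^esub>, q) \<in> \<phi> ` carrier G" using \<phi>s by auto
      then obtain x where "x \<in> carrier G" "\<phi> x = (\<one>\<^bsub>N\<^esub>, q)" by auto
      then show "q \<in> \<tau> ` carrier G" unfolding \<tau>_def by force
    qed
  qed
  have \<tau>e: "\<tau> \<in> epi G Q" using \<tau>h \<tau>s by (simp add: epi_def)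
  obtain S :: "nat set" and g0 R0 where fS: "finite S" and fR0: "finite R0"
    and P: "is_presentation G S g0 R0"
    using fpG by (auto simp: finitely_presented_def)
  have gS: "g0 ` S \<subseteq> carrier G" and gen: "generate G (g0 ` S) = carrier G"
    using P by (auto simp: is_presentation_def)
  define t where "t = card (carrier Q)"
  obtain e where e: "bij_betw e {..<t} (carrier Q)"
    using ex_bij_betw_nat_finite[OF fQ] by (auto simp: t_def atLeast0LessThan)
  have exq: "\<exists>x. x \<in> carrier G \<and> \<tau> x = q" if "q \<in> carrier Q" for q
    using \<tau>s that by (metis imageE)
  define xq where "xq q = (SOME x. x \<in> carrier G \<and> \<tau> x = q)" for q
  have xq: "xq q \<in> carrier G \<and> \<tau> (xq q) = q" if "q \<in> carrier Q" for q
    unfolding xq_def using someI_ex[OF exq[OF that]] .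
  define Yset where "Yset = (\<lambda>(q,s). xq q \<otimes>\<^bsub>G\<^esub> g0 s \<otimes>\<^bsub>G\<^esub> inv\<^bsub>G\<^esub> (xq (q \<otimes>\<^bsub>Q\<^esub> \<tau> (g0 s)))) ` (carrier Q \<times> S)
       \<union> {xq \<one>\<^bsub>Q\<^esub>}"
  have fY: "finite Yset" unfolding Yset_def using fQ fS by simp
  define l where "l = card Yset"
  obtain yv where yv: "bij_betw yv {..<l} Yset"
    using ex_bij_betw_nat_finite[OF fY] by (auto simp: l_def atLeast0LessThan)
  define g where "g = case_sum (\<lambda>j. xq (e j)) yv"
  have Ysub: "Yset \<subseteq> carrier G"
    unfolding Yset_def using xq gS by auto
  have YK: "Yset \<subseteq> kernel G Q \<tau>"
  proof
    fix y assume "y \<in> Yset"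
    then consider "y = xq \<one>\<^bsub>Q\<^esub>" | q s where "q \<in> carrier Q" "s \<in> S"
       "y = xq q \<otimes>\<^bsub>G\<^esub> g0 s \<otimes>\<^bsub>G\<^esub> inv\<^bsub>G\<^esub> (xq (q \<otimes>\<^bsub>Q\<^esub> \<tau> (g0 s)))"
      unfolding Yset_def by auto
    then show "y \<in> kernel G Q \<tau>"
    proof cases
      case 1 then show ?thesis using xq[of "\<one>\<^bsub>Q\<^esub>"] by (simp add: kernel_def)
    next
      case 2
      have c: "g0 s \<in> carrier G" "\<tau> (g0 s) \<in> carrier Q" using 2 gS by auto
      then have "\<tau> y = q \<otimes>\<^bsub>Q\<^esub> \<tau> (g0 s) \<otimes>\<^bsub>Q\<^esub> inv\<^bsub>Q\<^esub> (q \<otimes>\<^bsub>Q\<^esub> \<tau> (g0 s))"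
        using 2 xq[of q] xq[of "q \<otimes>\<^bsub>Q\<^esub> \<tau> (g0 s)"] by simp
      also have "\<dots> = \<one>\<^bsub>Q\<^esub>" using 2 c by simp
      finally show ?thesis using 2 c xq[of q] xq[of "q \<otimes>\<^bsub>Q\<^esub> \<tau> (g0 s)"] by (simp add: kernel_def)
    qed
  qed
  have gInr: "(\<lambda>j. g (Inr j)) ` {..<l} = Yset"
    using yv by (simp add: g_def bij_betw_def)
  define H where "H = generate G Yset"
  have Hsg: "subgroup H G" unfolding H_def using G.generate_is_subgroup[OF Ysub] .
  have schreier: "\<forall>q\<in>carrier Q. xq q \<otimes>\<^bsub>G\<^esub> a \<otimes>\<^bsub>G\<^esub> inv\<^bsub>G\<^esub> (xq (q \<otimes>\<^bsub>Q\<^esub> \<tau> a)) \<in> H"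
    if "a \<in> generate G (g0 ` S)" for a
    using that
  proof (induction rule: generate.induct)
    case one
    show ?case using xq Hsg by (auto intro: subgroup.one_closed)
  next
    case (incl h)
    then obtain s where s: "s \<in> S" "h = g0 s" by auto
    show ?case unfolding H_def
    proof
      fix q assume "q \<in> carrier Q"
      then show "xq q \<otimes>\<^bsub>G\<^esub> h \<otimes>\<^bsub>G\<^esub> inv\<^bsub>G\<^esub> (xq (q \<otimes>\<^bsub>Q\<^esub> \<tau> h)) \<in> generate G Yset"
        using s by (intro generate.incl) (auto simp: Yset_def)
    qed
  next
    case (inv h)
    then obtain s where s: "s \<in> S" "h = g0 s" by auto
    have hc: "h \<in> carrier G" "\<tau> h \<in> carrier Q" using s gS by auto
    show ?case
    proof
      fix q assume q: "q \<in> carrier Q"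
      define q' where "q' = q \<otimes>\<^bsub>Q\<^esub> inv\<^bsub>Q\<^esub> (\<tau> h)"
      have q'c: "q' \<in> carrier Q" using q hc by (simp add: q'_def)
      have q'q: "q' \<otimes>\<^bsub>Q\<^esub> \<tau> h = q" using q hc by (simp add: q'_def Q.m_assoc)
      have "xq q' \<otimes>\<^bsub>G\<^esub> h \<otimes>\<^bsub>G\<^esub> inv\<^bsub>G\<^esub> (xq (q' \<otimes>\<^bsub>Q\<^esub> \<tau> h)) \<in> Yset"
        using s q'c unfolding Yset_def by auto
      then have y: "xq q' \<otimes>\<^bsub>G\<^esub> h \<otimes>\<^bsub>G\<^esub> inv\<^bsub>G\<^esub> (xq q) \<in> H"
        unfolding H_def using q'q by (auto intro: generate.incl)
      have xc: "xq q \<in> carrier G" "xq q' \<in> carrier G" using xq q q'c by auto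
      have "inv\<^bsub>G\<^esub> (xq q' \<otimes>\<^bsub>G\<^esub> h \<otimes>\<^bsub>G\<^esub> inv\<^bsub>G\<^esub> (xq q)) = xq q \<otimes>\<^bsub>G\<^esub> inv\<^bsub>G\<^esub> h \<otimes>\<^bsub>G\<^esub> inv\<^bsub>G\<^esub> (xq q')"
        using xc hc by (simp add: G.inv_mult_group G.m_assoc)
      moreover have "xq (q \<otimes>\<^bsub>Q\<^esub> \<tau> (inv\<^bsub>G\<^esub> h)) = xq q'" using hc by (simp add: q'_def)
      ultimately show "xq q \<otimes>\<^bsub>G\<^esub> inv\<^bsub>G\<^esub> h \<otimes>\<^bsub>G\<^esub> inv\<^bsub>G\<^esub> (xq (q \<otimes>\<^bsub>Q\<^esub> \<tau> (inv\<^bsub>G\<^esub> h))) \<in> H"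
        using subgroup.m_inv_closed[OF Hsg y] by simp
    qed
  next
    case (eng a b)
    have ac: "a \<in> carrier G" "b \<in> carrier G"
      using eng.hyps G.generate_in_carrier[OF gS] by auto
    show ?case
    proof
      fix q assume q: "q \<in> carrier Q"
      define q1 where "q1 = q \<otimes>\<^bsub>Q\<^esub> \<tau> a"
      have q1c: "q1 \<in> carrier Q" using q ac by (simp add: q1_def)
      have A: "xq q \<otimes>\<^bsub>G\<^esub> a \<otimes>\<^bsub>G\<^esub> inv\<^bsub>G\<^esub> (xq q1) \<in> H" using eng.IH(1) q by (simp add: q1_def)
      have B: "xq q1 \<otimes>\<^bsub>G\<^esub> b \<otimes>\<^bsub>G\<^esub> inv\<^bsub>G\<^esub> (xq (q1 \<otimes>\<^bsub>Q\<^esub> \<tau> b)) \<in> H" using eng.IH(2) q1c by simp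
      have eqq: "q \<otimes>\<^bsub>Q\<^esub> \<tau> (a \<otimes>\<^bsub>G\<^esub> b) = q1 \<otimes>\<^bsub>Q\<^esub> \<tau> b" using q ac by (simp add: q1_def Q.m_assoc)
      have xc: "xq q \<in> carrier G" "xq q1 \<in> carrier G" "xq (q1 \<otimes>\<^bsub>Q\<^esub> \<tau> b) \<in> carrier G"
        using xq q q1c ac by auto
      have "(xq q \<otimes>\<^bsub>G\<^esub> a \<otimes>\<^bsub>G\<^esub> inv\<^bsub>G\<^esub> (xq q1)) \<otimes>\<^bsub>G\<^esub> (xq q1 \<otimes>\<^bsub>G\<^esub> b \<otimes>\<^bsub>G\<^esub> inv\<^bsub>G\<^esub> (xq (q1 \<otimes>\<^bsub>Q\<^esub> \<tau> b)))
          = xq q \<otimes>\<^bsub>G\<^esub> (a \<otimes>\<^bsub>G\<^esub> b) \<otimes>\<^bsub>G\<^esub> inv\<^bsub>G\<^esub> (xq (q \<otimes>\<^bsub>Q\<^esub> \<tau> (a \<otimes>\<^bsub>G\<^esub> b)))"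
        using xc ac eqq by (simp add: G.m_assoc G.inv_cancel_mid)
      then show "xq q \<otimes>\<^bsub>G\<^esub> (a \<otimes>\<^bsub>G\<^esub> b) \<otimes>\<^bsub>G\<^esub> inv\<^bsub>G\<^esub> (xq (q \<otimes>\<^bsub>Q\<^esub> \<tau> (a \<otimes>\<^bsub>G\<^esub> b))) \<in> H"
        using subgroup.m_closed[OF Hsg A B] by simp
    qed
  qed
  have KH: "kernel G Q \<tau> \<subseteq> H"
  proof
    fix a assume a: "a \<in> kernel G Q \<tau>"
    then have ac: "a \<in> carrier G" "\<tau> a = \<one>\<^bsub>Q\<^esub>" by (auto simp: kernel_def)
    have x1: "xq \<one>\<^bsub>Q\<^esub> \<in> carrier G" using xq by simp
    have c: "xq \<one>\<^bsub>Q\<^esub> \<otimes>\<^bsub>G\<^esub> a \<otimes>\<^bsub>G\<^esub> inv\<^bsub>G\<^esub> (xq \<one>\<^bsub>Q\<^esub>) \<in> H"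
      using schreier[of a] ac gen by simp
    have x1H: "xq \<one>\<^bsub>Q\<^esub> \<in> H" unfolding H_def Yset_def by (auto intro: generate.incl)
    have "inv\<^bsub>G\<^esub> (xq \<one>\<^bsub>Q\<^esub>) \<otimes>\<^bsub>G\<^esub> (xq \<one>\<^bsub>Q\<^esub> \<otimes>\<^bsub>G\<^esub> a \<otimes>\<^bsub>G\<^esub> inv\<^bsub>G\<^esub> (xq \<one>\<^bsub>Q\<^esub>)) \<otimes>\<^bsub>G\<^esub> xq \<one>\<^bsub>Q\<^esub> = a"
      using x1 ac by (simp add: G.m_assoc G.inv_cancel_mid)
    moreover have "inv\<^bsub>G\<^esub> (xq \<one>\<^bsub>Q\<^esub>) \<otimes>\<^bsub>G\<^esub> (xq \<one>\<^bsub>Q\<^esub> \<otimes>\<^bsub>G\<^esub> a \<otimes>\<^bsub>G\<^esub> inv\<^bsub>G\<^esub> (xq \<one>\<^bsub>Q\<^esub>)) \<otimes>\<^bsub>G\<^esub> xq \<one>\<^bsub>Q\<^esub> \<in> H"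
      using subgroup.m_closed[OF Hsg subgroup.m_closed[OF Hsg subgroup.m_inv_closed[OF Hsg x1H] c] x1H] .
    ultimately show "a \<in> H" by simp
  qed
  have genK: "generate G ((\<lambda>j. g (Inr j)) ` {..<l}) = kernel G Q \<tau>"
  proof
    show "generate G ((\<lambda>j. g (Inr j)) ` {..<l}) \<subseteq> kernel G Q \<tau>"
      unfolding gInr using YK \<tau>.subgroup_kernel by (intro G.generate_subgroup_incl)
    show "kernel G Q \<tau> \<subseteq> generate G ((\<lambda>j. g (Inr j)) ` {..<l})"
      using KH unfolding gInr H_def .
  qed
  have bij: "bij_betw (\<lambda>j. \<tau> (g (Inl j))) {..<t} (carrier Q)"
  proof -
    have "bij_betw e {..<t} (carrier Q)" by fact
    moreover have "\<And>j. j \<in> {..<t} \<Longrightarrow> \<tau> (g (Inl j)) = e j"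
      using e xq by (auto simp: g_def bij_betw_def)
    ultimately show ?thesis using bij_betw_cong by (metis (no_types, lifting))
  qed
  have ec: "\<And>j. j < t \<Longrightarrow> e j \<in> carrier Q" using e by (auto simp: bij_betw_def)
  have XYc: "g ` XY_gens t l \<subseteq> carrier G"
    using ec xq Ysub yv unfolding XY_gens_def g_def bij_betw_def by auto
  have XYgen: "generate G (g ` XY_gens t l) = carrier G"
  proof
    show "generate G (g ` XY_gens t l) \<subseteq> carrier G" using G.generate_incl[OF XYc] .
    show "carrier G \<subseteq> generate G (g ` XY_gens t l)"
    proof
      fix a assume a: "a \<in> carrier G"
      then have "\<tau> a \<in> e ` {..<t}" using e by (auto simp: bij_betw_def)
      then obtain j where j: "j < t" "e j = \<tau> a" by auto
      have ej: "e j \<in> carrier Q" using j a by simp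
      define x where "x = xq (e j)"
      have xc: "x \<in> carrier G" "\<tau> x = \<tau> a" using xq[OF ej] j by (auto simp: x_def)
      have "inv\<^bsub>G\<^esub> x \<otimes>\<^bsub>G\<^esub> a \<in> kernel G Q \<tau>" using xc a by (simp add: kernel_def)
      then have "inv\<^bsub>G\<^esub> x \<otimes>\<^bsub>G\<^esub> a \<in> generate G ((\<lambda>j. g (Inr j)) ` {..<l})" using genK by simp
      moreover have "generate G ((\<lambda>j. g (Inr j)) ` {..<l}) \<subseteq> generate G (g ` XY_gens t l)"
        by (intro G.mono_generate) (auto simp: XY_gens_def)
      ultimately have 1: "inv\<^bsub>G\<^esub> x \<otimes>\<^bsub>G\<^esub> a \<in> generate G (g ` XY_gens t l)" by auto
      have 2: "x \<in> generate G (g ` XY_gens t l)"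
      proof -
        have "Inl j \<in> XY_gens t l" using j by (simp add: XY_gens_def)
        moreover have "x = g (Inl j)" by (simp add: g_def x_def)
        ultimately show ?thesis by (intro generate.incl) simp
      qed
      have "x \<otimes>\<^bsub>G\<^esub> (inv\<^bsub>G\<^esub> x \<otimes>\<^bsub>G\<^esub> a) \<in> generate G (g ` XY_gens t l)"
        using 2 1 by (rule generate.eng)
      then show "a \<in> generate G (g ` XY_gens t l)" using xc a by (simp add: G.m_assoc[symmetric])
    qed
  qed
  have fXY: "finite (XY_gens t l)" by (simp add: XY_gens_def)
  obtain R where fR: "finite R" and PR: "is_presentation G (XY_gens t l) g R"
    using tietze[OF G P fR0 fXY XYc XYgen] by blast
  have QT: "Q_tau_presentation G Q \<tau> t l g R"
    unfolding Q_tau_presentation_def using fR PR bij genK by blast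
  define h where "h j = \<pi> (g (Inl j))" for j
  define k where "k j = \<pi> (g (Inr j))" for j
  have hk: "case_sum h k = (\<lambda>s. \<pi> (g s))" by (auto simp: h_def k_def split: sum.split)
  have hc: "\<forall>j<t. h j \<in> carrier N" using XYc by (auto simp: h_def XY_gens_def image_subset_iff intro!: \<pi>.hom_closed)
  have kc: "\<forall>j<l. k j \<in> carrier N" using XYc by (auto simp: k_def XY_gens_def image_subset_iff intro!: \<pi>.hom_closed)
  have rel: "\<forall>r\<in>R. eval_word N (case_sum h k) r = \<one>\<^bsub>N\<^esub>"
  proof
    fix r assume r: "r \<in> R"
    then have "word_over (XY_gens t l) r" "eval_word G g r = \<one>\<^bsub>G\<^esub>"
      using PR by (auto simp: is_presentation_def)
    then show "eval_word N (case_sum h k) r = \<one>\<^bsub>N\<^esub>"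
      unfolding hk using eval_word_hom[OF G N \<pi>h XYc] by (metis \<pi>.hom_one)
  qed
  have kgen: "generate N (k ` {..<l}) = carrier N"
  proof -
    have "k ` {..<l} = \<pi> ` Yset" using gInr by (auto simp: k_def)
    then have "generate N (k ` {..<l}) = \<pi> ` H"
      unfolding H_def using \<pi>.generate_img[OF Ysub] by simp
    also have "\<dots> = \<pi> ` kernel G Q \<tau>" using KH genK gInr H_def by auto
    also have "\<dots> = carrier N"
    proof
      show "\<pi> ` kernel G Q \<tau> \<subseteq> carrier N" by (auto simp: kernel_def)
      show "carrier N \<subseteq> \<pi> ` kernel G Q \<tau>"
      proof
        fix n assume "n \<in> carrier N"
        then have "(n, \<one>\<^bsub>Q\<^esub>) \<in> \<phi> ` carrier G" using \<phi>s by auto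
        then obtain x where "x \<in> carrier G" "\<phi> x = (n, \<one>\<^bsub>Q\<^esub>)" by auto
        then show "n \<in> \<pi> ` kernel G Q \<tau>" unfolding \<pi>_def \<tau>_def kernel_def by force
      qed
    qed
    finally show ?thesis .
  qed
  show ?thesis using \<tau>e QT hc kc rel kgen by blast
qed


lemma backward:
  fixes G :: "'g monoid" and N :: "'n monoid" and Q :: "'q monoid"
  assumes G: "group G" and N: "group N" and Q: "group Q"
    and \<tau>e: "\<tau> \<in> epi G Q" and QT: "Q_tau_presentation G Q \<tau> t l g R"
    and hc: "\<forall>j<t. h j \<in> carrier N" and kc: "\<forall>j<l. k j \<in> carrier N"
    and rel: "\<forall>r\<in>R. eval_word N (case_sum h k) r = \<one>\<^bsub>N\<^esub>"
    and kgen: "generate N (k ` {..<l}) = carrier N"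
  shows "\<exists>\<phi>. \<phi> \<in> epi G (N \<times>\<times> Q)"
proof -
  interpret G: group G by fact
  interpret N: group N by fact
  interpret Q: group Q by fact
  have \<tau>h: "\<tau> \<in> hom G Q" and \<tau>s: "\<tau> ` carrier G = carrier Q" using \<tau>e by (auto simp: epi_def)
  interpret \<tau>: group_hom G Q \<tau>
    using \<tau>h by (simp add: group_hom_def group_hom_axioms_def G Q)
  have P: "is_presentation G (XY_gens t l) g R"
    and genK: "generate G ((\<lambda>j. g (Inr j)) ` {..<l}) = kernel G Q \<tau>"
    using QT by (auto simp: Q_tau_presentation_def)
  have fc: "case_sum h k ` XY_gens t l \<subseteq> carrier N"
    using hc kc by (auto simp: XY_gens_def)
  obtain \<psi> where \<psi>h: "\<psi> \<in> hom G N" and \<psi>g: "\<forall>s\<in>XY_gens t l. \<psi> (g s) = case_sum h k s"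
    using vonDyck[OF G N P fc] rel by blast
  interpret \<psi>: group_hom G N \<psi>
    using \<psi>h by (simp add: group_hom_def group_hom_axioms_def G N)
  have gc: "g ` XY_gens t l \<subseteq> carrier G" using P by (simp add: is_presentation_def)
  have Ysub: "(\<lambda>j. g (Inr j)) ` {..<l} \<subseteq> carrier G" using gc by (auto simp: XY_gens_def)
  have "\<psi> ` kernel G Q \<tau> = \<psi> ` generate G ((\<lambda>j. g (Inr j)) ` {..<l})" using genK by simp
  also have "\<dots> = generate N (\<psi> ` (\<lambda>j. g (Inr j)) ` {..<l})"
    using \<psi>.generate_img[OF Ysub] by simp
  also have "\<psi> ` (\<lambda>j. g (Inr j)) ` {..<l} = k ` {..<l}"
    using \<psi>g by (force simp: XY_gens_def)
  finally have \<psi>K: "\<psi> ` kernel G Q \<tau> = carrier N" using kgen by simp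
  define \<phi> where "\<phi> x = (\<psi> x, \<tau> x)" for x
  have \<phi>h: "\<phi> \<in> hom G (N \<times>\<times> Q)"
    by (rule homI) (auto simp: \<phi>_def)
  have "\<phi> ` carrier G = carrier N \<times> carrier Q"
  proof
    show "\<phi> ` carrier G \<subseteq> carrier N \<times> carrier Q" by (auto simp: \<phi>_def)
    show "carrier N \<times> carrier Q \<subseteq> \<phi> ` carrier G"
    proof
      fix p assume "p \<in> carrier N \<times> carrier Q"
      then obtain n q where p: "p = (n, q)" "n \<in> carrier N" "q \<in> carrier Q" by auto
      then obtain x where x: "x \<in> carrier G" "\<tau> x = q" using \<tau>s by (metis imageE)
      have "n \<otimes>\<^bsub>N\<^esub> inv\<^bsub>N\<^esub> (\<psi> x) \<in> \<psi> ` kernel G Q \<tau>" using \<psi>K p x by simp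
      then obtain y where y: "y \<in> kernel G Q \<tau>" "\<psi> y = n \<otimes>\<^bsub>N\<^esub> inv\<^bsub>N\<^esub> (\<psi> x)" by auto
      have yc: "y \<in> carrier G" "\<tau> y = \<one>\<^bsub>Q\<^esub>" using y by (auto simp: kernel_def)
      have "\<phi> (y \<otimes>\<^bsub>G\<^esub> x) = (n, q)"
        using yc x y p by (simp add: \<phi>_def N.m_assoc)
      moreover have "y \<otimes>\<^bsub>G\<^esub> x \<in> carrier G" using yc x by simp
      ultimately show "p \<in> \<phi> ` carrier G" using p by (metis imageI)
    qed
  qed
  then show ?thesis using \<phi>h by (auto simp: epi_def)
qed

theorem lemma3p2:
  fixes G :: "'g monoid" and N :: "'n monoid" and Q :: "'q monoid"
  assumes "group G" and "group N" and "group Q"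
    and "finitely_presented G" and "finitely_presented N"
    and "finite (carrier Q)"
  shows "(\<exists>\<phi>. \<phi> \<in> epi G (N \<times>\<times> Q)) \<longleftrightarrow>
         (\<exists>\<tau> t l g R. \<tau> \<in> epi G Q \<and> Q_tau_presentation G Q \<tau> t l g R \<and>
            (\<exists>h k. (\<forall>j<t. h j \<in> carrier N) \<and> (\<forall>j<l. k j \<in> carrier N) \<and>
                   (\<forall>r\<in>R. eval_word N (case_sum h k) r = \<one>\<^bsub>N\<^esub>) \<and>
                   generate N (k ` {..<l}) = carrier N))"
proof
  assume "\<exists>\<phi>. \<phi> \<in> epi G (N \<times>\<times> Q)"
  then obtain \<phi> where "\<phi> \<in> epi G (N \<times>\<times> Q)" by blast
  then show "\<exists>\<tau> t l g R. \<tau> \<in> epi G Q \<and> Q_tau_presentation G Q \<tau> t l g R \<and>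
            (\<exists>h k. (\<forall>j<t. h j \<in> carrier N) \<and> (\<forall>j<l. k j \<in> carrier N) \<and>
                   (\<forall>r\<in>R. eval_word N (case_sum h k) r = \<one>\<^bsub>N\<^esub>) \<and>
                   generate N (k ` {..<l}) = carrier N)"
    using forward[OF assms(1,2,3,4,6)] by blast
next
  assume "\<exists>\<tau> t l g R. \<tau> \<in> epi G Q \<and> Q_tau_presentation G Q \<tau> t l g R \<and>
            (\<exists>h k. (\<forall>j<t. h j \<in> carrier N) \<and> (\<forall>j<l. k j \<in> carrier N) \<and>
                   (\<forall>r\<in>R. eval_word N (case_sum h k) r = \<one>\<^bsub>N\<^esub>) \<and>
                   generate N (k ` {..<l}) = carrier N)"
  then show "\<exists>\<phi>. \<phi> \<in> epi G (N \<times>\<times> Q)"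
    using backward[OF assms(1,2,3)] by blast
qed

end
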